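(* Let $D$ be a division algebra and let $\sigma_1,\sigma_2$ be two commuting automorphisms of $D$. In the skew polynomial ring $T=D[t_1,t_2;\sigma_1,\sigma_2]$, let $I$ be the two-sided ideal generated by $t_1t_2$, and let $S=T/I$. Then every two commuting elements of $S$ are (left) algebraically dependent over $D$.
   Context: $D[t_1,t_2;\sigma_1,\sigma_2]$ is the skew polynomial ring in two commuting variables with $t_ia=\sigma_i(a)t_i$ for $a\in D$. Commuting elements $x_1,x_2$ of a ring $S\supseteq D$ are (left) algebraically dependent over $D$ if the set of monomials $\{x_1^{i_1}x_2^{i_2}:(i_1,i_2)\in\mathbb{Z}_{\ge0}^2\}$ is not left linearly independent over $D$ (in particular if two distinct exponent pairs give the same monomial). *)

theory Defs
  imports "HOL-Algebra.QuotRing"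
begin

definition ring_automorphism :: "('a::division_ring \<Rightarrow> 'a) \<Rightarrow> bool" where
  "ring_automorphism \<sigma> \<longleftrightarrow> bij \<sigma> \<and> (\<forall>x y. \<sigma> (x + y) = \<sigma> x + \<sigma> y)
     \<and> (\<forall>x y. \<sigma> (x * y) = \<sigma> x * \<sigma> y) \<and> \<sigma> 1 = 1"

text \<open>Elements of D[t1,t2;s1,s2] are finitely supported coefficient functions
  p with p = sum of p(i,j) t1^i t2^j (coefficients on the left).
  Multiplication: (a t1^i t2^j)(b t1^k t2^l) = a s1^i(s2^j(b)) t1^(i+k) t2^(j+l).\<close>
definition skew_mult ::
  "('a::division_ring \<Rightarrow> 'a) \<Rightarrow> ('a \<Rightarrow> 'a) \<Rightarrow> (nat \<times> nat \<Rightarrow> 'a) \<Rightarrow> (nat \<times> nat \<Rightarrow> 'a) \<Rightarrow> (nat \<times> nat \<Rightarrow> 'a)" where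
  "skew_mult \<sigma>1 \<sigma>2 p q = (\<lambda>(m, n). \<Sum>i\<le>m. \<Sum>j\<le>n.
       p (i, j) * (\<sigma>1 ^^ i) ((\<sigma>2 ^^ j) (q (m - i, n - j))))"

definition skew_monom :: "'a::division_ring \<Rightarrow> nat \<times> nat \<Rightarrow> (nat \<times> nat \<Rightarrow> 'a)" where
  "skew_monom a e = (\<lambda>x. if x = e then a else 0)"

definition skew_poly_ring ::
  "('a::division_ring \<Rightarrow> 'a) \<Rightarrow> ('a \<Rightarrow> 'a) \<Rightarrow> (nat \<times> nat \<Rightarrow> 'a) ring" where
  "skew_poly_ring \<sigma>1 \<sigma>2 =
     \<lparr>carrier = {p. finite {x. p x \<noteq> 0}},
      monoid.mult = skew_mult \<sigma>1 \<sigma>2,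
      one = skew_monom 1 (0, 0),
      zero = (\<lambda>_. 0),
      add = (\<lambda>p q x. p x + q x)\<rparr>"

definition t1t2_ideal :: "('a::division_ring \<Rightarrow> 'a) \<Rightarrow> ('a \<Rightarrow> 'a) \<Rightarrow> (nat \<times> nat \<Rightarrow> 'a) set" where
  "t1t2_ideal \<sigma>1 \<sigma>2 = genideal (skew_poly_ring \<sigma>1 \<sigma>2) {skew_monom 1 (1, 1)}"

definition skew_quot ::
  "('a::division_ring \<Rightarrow> 'a) \<Rightarrow> ('a \<Rightarrow> 'a) \<Rightarrow> (nat \<times> nat \<Rightarrow> 'a) set ring" where
  "skew_quot \<sigma>1 \<sigma>2 = skew_poly_ring \<sigma>1 \<sigma>2 Quot t1t2_ideal \<sigma>1 \<sigma>2"

definition quot_const ::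
  "('a::division_ring \<Rightarrow> 'a) \<Rightarrow> ('a \<Rightarrow> 'a) \<Rightarrow> 'a \<Rightarrow> (nat \<times> nat \<Rightarrow> 'a) set" where
  "quot_const \<sigma>1 \<sigma>2 a =
     a_r_coset (skew_poly_ring \<sigma>1 \<sigma>2) (t1t2_ideal \<sigma>1 \<sigma>2) (skew_monom a (0, 0))"

definition left_alg_dependent ::
  "('a::division_ring \<Rightarrow> 'a) \<Rightarrow> ('a \<Rightarrow> 'a) \<Rightarrow> (nat \<times> nat \<Rightarrow> 'a) set \<Rightarrow> (nat \<times> nat \<Rightarrow> 'a) set \<Rightarrow> bool" where
  "left_alg_dependent \<sigma>1 \<sigma>2 x1 x2 \<longleftrightarrow>
     (let S = skew_quot \<sigma>1 \<sigma>2 in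
      \<exists>c :: nat \<times> nat \<Rightarrow> 'a. finite {e. c e \<noteq> 0} \<and> (\<exists>e. c e \<noteq> 0) \<and>
        finsum S (\<lambda>e. quot_const \<sigma>1 \<sigma>2 (c e) \<otimes>\<^bsub>S\<^esub>
             (x1 [^]\<^bsub>S\<^esub> fst e \<otimes>\<^bsub>S\<^esub> x2 [^]\<^bsub>S\<^esub> snd e)) {e. c e \<noteq> 0}
        = \<zero>\<^bsub>S\<^esub>)"

end

theory Submission
  imports Defs "HOL-Algebra.UnivPoly"
begin


definition rhom :: "('a::division_ring \<Rightarrow> 'a) \<Rightarrow> bool" where
  "rhom s \<longleftrightarrow> (\<forall>x y. s (x + y) = s x + s y) \<and> (\<forall>x y. s (x * y) = s x * s y) \<and> s 1 = 1"

lemma rhom_funpow: "rhom s \<Longrightarrow> rhom (s ^^ n)"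
  by (induction n) (auto simp: rhom_def)

lemma rhom_comp: "rhom s \<Longrightarrow> rhom t \<Longrightarrow> rhom (s \<circ> t)"
  by (auto simp: rhom_def)

lemma rhom_zero: "rhom s \<Longrightarrow> s 0 = 0"
  unfolding rhom_def by (metis add_cancel_right_right)

lemma rhom_sum: "rhom s \<Longrightarrow> s (sum f A) = (\<Sum>a\<in>A. s (f a))"
  by (induction A rule: infinite_finite_induct) (auto simp: rhom_zero rhom_def)

lemma funpow_comm: "s \<circ> t = t \<circ> s \<Longrightarrow> (s ^^ n) \<circ> t = t \<circ> (s ^^ n)"
proof (induction n)
  case (Suc n) then show ?case by (metis comp_assoc funpow.simps(2))
qed simp

lemma funpow_comm2: "s \<circ> t = t \<circ> s \<Longrightarrow> (s ^^ n) \<circ> (t ^^ m) = (t ^^ m) \<circ> (s ^^ n)"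
  by (metis funpow_comm)

lemma tri_reindex:
  fixes G :: "nat \<Rightarrow> nat \<Rightarrow> 'b::comm_monoid_add"
  shows "(\<Sum>a\<le>m. \<Sum>i\<le>a. G a i) = (\<Sum>i\<le>m. \<Sum>k\<le>m-i. G (i+k) i)"
proof (induction m)
  case 0 then show ?case by simp
next
  case (Suc m)
  have "(\<Sum>i\<le>Suc m. \<Sum>k\<le>Suc m-i. G (i+k) i) = (\<Sum>i\<le>m. \<Sum>k\<le>Suc m-i. G (i+k) i) + G (Suc m) (Suc m)"
    by simp
  also have "(\<Sum>i\<le>m. \<Sum>k\<le>Suc m-i. G (i+k) i) = (\<Sum>i\<le>m. (\<Sum>k\<le>m-i. G (i+k) i) + G (Suc m) i)"
  proof (rule sum.cong[OF refl])
    fix i assume "i \<in> {..m}"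
    then have "Suc m - i = Suc (m - i)" by auto
    then show "(\<Sum>k\<le>Suc m-i. G (i+k) i) = (\<Sum>k\<le>m-i. G (i+k) i) + G (Suc m) i"
      using \<open>i \<in> {..m}\<close> by simp
  qed
  finally show ?case using Suc by (simp add: sum.distrib add.assoc)
qed

lemma dsum:
  fixes m n :: nat
  assumes "a \<le> m" "b \<le> n"
  shows "(\<Sum>i\<le>m. \<Sum>j\<le>n. if i = a \<and> j = b then c else 0) = c"
proof -
  have "(\<Sum>i\<le>m. \<Sum>j\<le>n. if i = a \<and> j = b then c else 0) = (\<Sum>i\<le>m. if i = a then (\<Sum>j\<le>n. if j = b then c else 0) else 0)"
    by (intro sum.cong) auto
  also have "\<dots> = c" using assms by simp
  finally show ?thesis .
qed

locale skewctx =
  fixes \<sigma>1 \<sigma>2 :: "'a::division_ring \<Rightarrow> 'a"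
  assumes h1: "rhom \<sigma>1" and h2: "rhom \<sigma>2" and cm: "\<sigma>1 \<circ> \<sigma>2 = \<sigma>2 \<circ> \<sigma>1"
begin

definition tw :: "nat \<Rightarrow> nat \<Rightarrow> 'a \<Rightarrow> 'a" where
  "tw i j x = (\<sigma>1 ^^ i) ((\<sigma>2 ^^ j) x)"

lemma tw_rhom: "rhom (tw i j)"
proof -
  have "tw i j = (\<sigma>1 ^^ i) \<circ> (\<sigma>2 ^^ j)" by (auto simp: tw_def fun_eq_iff)
  then show ?thesis using rhom_comp rhom_funpow h1 h2 by metis
qed

lemma tw_add[simp]: "tw i j (x + y) = tw i j x + tw i j y"
  and tw_mult[simp]: "tw i j (x * y) = tw i j x * tw i j y"
  and tw_one[simp]: "tw i j 1 = 1"
  and tw_zero[simp]: "tw i j 0 = 0"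
  and tw_sum: "tw i j (sum f A) = (\<Sum>a\<in>A. tw i j (f a))"
  using tw_rhom[of i j] by (auto simp: rhom_def rhom_zero rhom_sum)

lemma tw_00[simp]: "tw 0 0 x = x" by (simp add: tw_def)

lemma tw_tw: "tw i j (tw k l x) = tw (i+k) (j+l) x"
proof -
  have "(\<sigma>2 ^^ j) ((\<sigma>1 ^^ k) y) = (\<sigma>1 ^^ k) ((\<sigma>2 ^^ j) y)" for y
    using funpow_comm2[OF cm, of k j] by (metis comp_apply)
  then show ?thesis by (simp add: tw_def funpow_add)
qed

abbreviation "R \<equiv> skew_poly_ring \<sigma>1 \<sigma>2"

lemma sm_def: "skew_mult \<sigma>1 \<sigma>2 p q (m, n) = (\<Sum>i\<le>m. \<Sum>j\<le>n. p (i, j) * tw i j (q (m - i, n - j)))"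
  by (simp add: skew_mult_def tw_def)

lemma sm_assoc: "skew_mult \<sigma>1 \<sigma>2 (skew_mult \<sigma>1 \<sigma>2 p q) r = skew_mult \<sigma>1 \<sigma>2 p (skew_mult \<sigma>1 \<sigma>2 q r)"
proof (rule ext, clarify)
  fix m n
  define F where "F i j a b = p (i, j) * tw i j (q (a - i, b - j)) * tw a b (r (m - a, n - b))" for i j a b
  have "skew_mult \<sigma>1 \<sigma>2 (skew_mult \<sigma>1 \<sigma>2 p q) r (m, n) = (\<Sum>a\<le>m. \<Sum>b\<le>n. \<Sum>i\<le>a. \<Sum>j\<le>b. F i j a b)"
    by (simp add: sm_def F_def sum_distrib_right)
  also have "\<dots> = (\<Sum>a\<le>m. \<Sum>i\<le>a. \<Sum>b\<le>n. \<Sum>j\<le>b. F i j a b)"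
    by (rule sum.cong[OF refl], rule sum.swap)
  also have "\<dots> = (\<Sum>i\<le>m. \<Sum>k\<le>m-i. \<Sum>b\<le>n. \<Sum>j\<le>b. F i j (i+k) b)"
    by (rule tri_reindex)
  also have "\<dots> = (\<Sum>i\<le>m. \<Sum>k\<le>m-i. \<Sum>j\<le>n. \<Sum>l\<le>n-j. F i j (i+k) (j+l))"
    by (intro sum.cong refl tri_reindex)
  also have "\<dots> = (\<Sum>i\<le>m. \<Sum>j\<le>n. \<Sum>k\<le>m-i. \<Sum>l\<le>n-j. F i j (i+k) (j+l))"
    by (rule sum.cong[OF refl], rule sum.swap)
  also have "\<dots> = skew_mult \<sigma>1 \<sigma>2 p (skew_mult \<sigma>1 \<sigma>2 q r) (m, n)"
    by (simp add: sm_def F_def tw_sum sum_distrib_left tw_tw mult.assoc diff_diff_add)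
  finally show "skew_mult \<sigma>1 \<sigma>2 (skew_mult \<sigma>1 \<sigma>2 p q) r (m, n) = skew_mult \<sigma>1 \<sigma>2 p (skew_mult \<sigma>1 \<sigma>2 q r) (m, n)" .
qed

lemma R_simps[simp]: "carrier R = {p. finite {x. p x \<noteq> 0}}"
  "mult R = skew_mult \<sigma>1 \<sigma>2" "one R = skew_monom 1 (0,0)" "zero R = (\<lambda>_. 0)"
  "add R = (\<lambda>p q x. p x + q x)"
  by (simp_all add: skew_poly_ring_def)

lemma sm_supp: "{x. skew_mult \<sigma>1 \<sigma>2 p q x \<noteq> 0} \<subseteq>
   (\<lambda>((i,j),(k,l)). (i+k, j+l)) ` ({x. p x \<noteq> 0} \<times> {x. q x \<noteq> 0})"
proof clarify
  fix m n assume "skew_mult \<sigma>1 \<sigma>2 p q (m, n) \<noteq> 0"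
  then obtain i j where ij: "i \<le> m" "j \<le> n" "p (i, j) * tw i j (q (m - i, n - j)) \<noteq> 0"
    unfolding sm_def by (metis (no_types, lifting) atMost_iff sum.neutral)
  then have "p (i,j) \<noteq> 0" "q (m-i, n-j) \<noteq> 0" by auto
  moreover have "(m, n) = (\<lambda>((i,j),(k,l)). (i+k, j+l)) ((i,j),(m-i,n-j))" using ij by auto
  ultimately show "(m, n) \<in> (\<lambda>((i,j),(k,l)). (i+k, j+l)) ` ({x. p x \<noteq> 0} \<times> {x. q x \<noteq> 0})"
    by blast
qed

lemma sm_closed: "finite {x. p x \<noteq> 0} \<Longrightarrow> finite {x. q x \<noteq> 0} \<Longrightarrow> finite {x. skew_mult \<sigma>1 \<sigma>2 p q x \<noteq> 0}"
  by (rule finite_subset[OF sm_supp]) auto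

lemma monom_supp: "finite {x. skew_monom a e x \<noteq> 0}"
  by (rule finite_subset[of _ "{e}"]) (auto simp: skew_monom_def)

lemma sm_one_left: "skew_mult \<sigma>1 \<sigma>2 (skew_monom a (0,0)) q = (\<lambda>x. a * q x)"
proof (rule ext, clarify)
  fix m n
  have "skew_mult \<sigma>1 \<sigma>2 (skew_monom a (0,0)) q (m, n) = (\<Sum>i\<le>m. \<Sum>j\<le>n. (if i = 0 \<and> j = 0 then a * q (m, n) else 0))"
    unfolding sm_def skew_monom_def by (intro sum.cong refl) auto
  also have "\<dots> = a * q (m, n)"
    by (rule dsum) auto
  finally show "skew_mult \<sigma>1 \<sigma>2 (skew_monom a (0,0)) q (m, n) = a * q (m, n)" .
qed

lemma sm_one_right: "skew_mult \<sigma>1 \<sigma>2 q (skew_monom 1 (0,0)) = q"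
proof (rule ext, clarify)
  fix m n
  have "skew_mult \<sigma>1 \<sigma>2 q (skew_monom 1 (0,0)) (m, n) = (\<Sum>i\<le>m. \<Sum>j\<le>n. (if i = m \<and> j = n then q (m, n) else 0))"
    unfolding sm_def skew_monom_def by (intro sum.cong refl) auto
  also have "\<dots> = q (m, n)"
    by (rule dsum) auto
  finally show "skew_mult \<sigma>1 \<sigma>2 q (skew_monom 1 (0,0)) (m, n) = q (m, n)" .
qed

lemma ring_R: "ring R"
proof (rule ringI)
  show "abelian_group R"
  proof (rule abelian_groupI)
    fix x y assume "x \<in> carrier R" "y \<in> carrier R"
    then show "x \<oplus>\<^bsub>R\<^esub> y \<in> carrier R"
      by (auto intro: finite_subset[of _ "{a. x a \<noteq> 0} \<union> {a. y a \<noteq> 0}"])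
  next
    fix x assume "x \<in> carrier R"
    then show "\<exists>y\<in>carrier R. y \<oplus>\<^bsub>R\<^esub> x = \<zero>\<^bsub>R\<^esub>"
      by (intro bexI[of _ "\<lambda>a. - x a"]) auto
  qed (auto simp: add.assoc add.commute)
next
  show "monoid R"
    by (rule monoidI) (auto simp: sm_closed monom_supp sm_assoc sm_one_left sm_one_right)
next
  fix x y z
  show "(x \<oplus>\<^bsub>R\<^esub> y) \<otimes>\<^bsub>R\<^esub> z = x \<otimes>\<^bsub>R\<^esub> z \<oplus>\<^bsub>R\<^esub> y \<otimes>\<^bsub>R\<^esub> z"
    by (simp, rule ext, clarify, simp only: sm_def ring_distribs sum.distrib)
  show "z \<otimes>\<^bsub>R\<^esub> (x \<oplus>\<^bsub>R\<^esub> y) = z \<otimes>\<^bsub>R\<^esub> x \<oplus>\<^bsub>R\<^esub> z \<otimes>\<^bsub>R\<^esub> y"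
    by (simp, rule ext, clarify, simp only: sm_def tw_add ring_distribs sum.distrib)
qed

lemma monom_mult: "skew_mult \<sigma>1 \<sigma>2 (skew_monom a (i,j)) (skew_monom b (k,l)) = skew_monom (a * tw i j b) (i+k, j+l)"
proof (rule ext, clarify)
  fix m n
  have "skew_mult \<sigma>1 \<sigma>2 (skew_monom a (i,j)) (skew_monom b (k,l)) (m, n) =
     (\<Sum>i'\<le>m. \<Sum>j'\<le>n. if i' = i \<and> j' = j then a * tw i j (skew_monom b (k,l) (m - i, n - j)) else 0)"
    unfolding sm_def by (intro sum.cong refl) (auto simp: skew_monom_def)
  also have "\<dots> = skew_monom (a * tw i j b) (i+k, j+l) (m, n)"
  proof (cases "i \<le> m \<and> j \<le> n")
    case True
    then show ?thesis by (subst dsum) (auto simp: skew_monom_def)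
  next
    case False
    then show ?thesis by (auto simp: skew_monom_def intro!: sum.neutral)
  qed
  finally show "skew_mult \<sigma>1 \<sigma>2 (skew_monom a (i,j)) (skew_monom b (k,l)) (m, n) = skew_monom (a * tw i j b) (i+k, j+l) (m, n)" .
qed

end

sublocale skewctx \<subseteq> Rr: ring "skew_poly_ring \<sigma>1 \<sigma>2" by (rule ring_R)

context skewctx begin

abbreviation "I \<equiv> t1t2_ideal \<sigma>1 \<sigma>2"

lemma ideal_I: "ideal I R"
  unfolding t1t2_ideal_def by (rule Rr.genideal_ideal) (simp add: monom_supp)

lemma gen_in: "skew_monom 1 (1,1) \<in> I"
  unfolding t1t2_ideal_def by (rule Rr.genideal_self'[simplified]) (simp add: monom_supp)

lemma monom_in_I: assumes "0 < i" "0 < j" shows "skew_monom a (i,j) \<in> I"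
proof -
  have "skew_mult \<sigma>1 \<sigma>2 (skew_mult \<sigma>1 \<sigma>2 (skew_monom a (i-1,0)) (skew_monom 1 (1,1))) (skew_monom 1 (0,j-1))
     = skew_monom a (i,j)"
    using assms by (simp add: monom_mult)
  moreover have "skew_mult \<sigma>1 \<sigma>2 (skew_mult \<sigma>1 \<sigma>2 (skew_monom a (i-1,0)) (skew_monom 1 (1,1))) (skew_monom 1 (0,j-1)) \<in> I"
  proof -
    have c1: "skew_monom a (i-1,0) \<in> carrier R" and c2: "skew_monom 1 (0,j-1) \<in> carrier R"
      using monom_supp by simp_all
    have "skew_monom a (i-1,0) \<otimes>\<^bsub>R\<^esub> skew_monom 1 (1,1) \<in> I"
      by (rule ideal.I_l_closed[OF ideal_I gen_in c1])
    then have "skew_monom a (i-1,0) \<otimes>\<^bsub>R\<^esub> skew_monom 1 (1,1) \<otimes>\<^bsub>R\<^esub> skew_monom 1 (0,j-1) \<in> I"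
      by (rule ideal.I_r_closed[OF ideal_I _ c2])
    then show ?thesis by simp
  qed
  ultimately show ?thesis by simp
qed

lemma zero_in_I: "(\<lambda>_. 0) \<in> I"
  using additive_subgroup.zero_closed[OF ideal.axioms(1)[OF ideal_I]] by simp

lemma add_in_I: "p \<in> I \<Longrightarrow> q \<in> I \<Longrightarrow> (\<lambda>x. p x + q x) \<in> I"
  using additive_subgroup.a_closed[OF ideal.axioms(1)[OF ideal_I]] by simp

lemma J_in_I_aux: "finite A \<Longrightarrow> \<forall>p. {x. p x \<noteq> 0} \<subseteq> A \<longrightarrow> (\<forall>i. p (i,0) = 0) \<longrightarrow> (\<forall>j. p (0,j) = 0) \<longrightarrow> p \<in> I"
proof (induction A rule: finite_induct)
  case empty
  show ?case
  proof (intro allI impI)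
    fix p :: "nat \<times> nat \<Rightarrow> 'a"
    assume "{x. p x \<noteq> 0} \<subseteq> {}"
    then have "p = (\<lambda>_. 0)" by blast
    then show "p \<in> I" using zero_in_I by simp
  qed
next
  case (insert g A)
  show ?case
  proof (intro allI impI)
    fix p :: "nat \<times> nat \<Rightarrow> 'a"
    assume p: "{x. p x \<noteq> 0} \<subseteq> insert g A" "\<forall>i. p (i,0) = 0" "\<forall>j. p (0,j) = 0"
    define p' where "p' = p(g := 0)"
    have s: "{x. p' x \<noteq> 0} \<subseteq> A" using p(1) unfolding p'_def by auto
    have b1: "\<forall>i. p' (i,0) = 0" using p(2) unfolding p'_def by simp
    have b2: "\<forall>j. p' (0,j) = 0" using p(3) unfolding p'_def by simp
    have "p' \<in> I" using insert.IH s b1 b2 by blast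
    obtain i j where g: "g = (i,j)" by force
    have "skew_monom (p g) g \<in> I"
    proof (cases "p g = 0")
      case True
      then have "skew_monom (p g) g = (\<lambda>_. 0)" by (simp add: skew_monom_def fun_eq_iff)
      then show ?thesis using zero_in_I by simp
    next
      case False
      have "i \<noteq> 0"
      proof
        assume "i = 0" then show False using False p(3) g by simp
      qed
      moreover have "j \<noteq> 0"
      proof
        assume "j = 0" then show False using False p(2) g by simp
      qed
      ultimately show ?thesis using monom_in_I g by simp
    qed
    moreover have "p = (\<lambda>x. skew_monom (p g) g x + p' x)"
      by (simp add: fun_eq_iff skew_monom_def p'_def)
    ultimately show "p \<in> I" using add_in_I[OF _ \<open>p' \<in> I\<close>] by metis
  qed
qed

lemma J_in_I: "p \<in> carrier R \<Longrightarrow> (\<forall>i. p (i,0) = 0) \<Longrightarrow> (\<forall>j. p (0,j) = 0) \<Longrightarrow> p \<in> I"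
  using J_in_I_aux[of "{x. p x \<noteq> 0}"] by auto

definition dg :: "(nat \<times> nat \<Rightarrow> 'a) \<Rightarrow> nat \<Rightarrow> bool" where
  "dg p d \<longleftrightarrow> (\<forall>m n. p (m,n) \<noteq> 0 \<longrightarrow> m + n \<le> d)"

lemma dg_mult: assumes "dg p d" "dg q e" shows "dg (skew_mult \<sigma>1 \<sigma>2 p q) (d + e)"
  unfolding dg_def
proof (intro allI impI)
  fix m n assume "skew_mult \<sigma>1 \<sigma>2 p q (m, n) \<noteq> 0"
  then obtain i j where ij: "i \<le> m" "j \<le> n" "p (i, j) * tw i j (q (m - i, n - j)) \<noteq> 0"
    unfolding sm_def by (metis (no_types, lifting) atMost_iff sum.neutral)
  then have "p (i,j) \<noteq> 0" "q (m-i, n-j) \<noteq> 0" by auto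
  then have "i + j \<le> d" "(m-i) + (n-j) \<le> e" using assms by (auto simp: dg_def)
  then show "m + n \<le> d + e" using ij by linarith
qed

lemma dg_one: "dg (skew_monom 1 (0,0)) 0"
  by (auto simp: dg_def skew_monom_def)

lemma dg_pow: "dg p d \<Longrightarrow> dg (p [^]\<^bsub>R\<^esub> (k::nat)) (k * d)"
proof (induction k)
  case 0 then show ?case using dg_one by simp
next
  case (Suc k)
  then show ?case using dg_mult[OF Suc.IH Suc.prems] by (simp add: add.commute)
qed

lemma dg_mono: "dg p d \<Longrightarrow> d \<le> e \<Longrightarrow> dg p e"
  unfolding dg_def by (meson order_trans)

lemma dg_exists: "p \<in> carrier R \<Longrightarrow> \<exists>d. dg p d"
proof -
  assume "p \<in> carrier R"
  then have f: "finite ((\<lambda>(m,n). m + n) ` {x. p x \<noteq> 0})" by simp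
  show ?thesis
    by (rule exI[of _ "Max ((\<lambda>(m,n). m + n) ` {x. p x \<noteq> 0})"])
      (auto simp: dg_def intro!: Max_ge[OF f])
qed

lemma finsum_eval: "finite A \<Longrightarrow> f \<in> A \<rightarrow> carrier R \<Longrightarrow> finsum R f A x = (\<Sum>a\<in>A. f a x)"
proof (induction A rule: finite_induct)
  case empty then show ?case by (simp add: Rr.finsum_empty)
next
  case (insert a A)
  then have "finsum R f (insert a A) = f a \<oplus>\<^bsub>R\<^esub> finsum R f A"
    by (intro Rr.finsum_insert) auto
  then show ?case using insert by simp
qed

end

lemma lin_dep:
  fixes v :: "'e \<Rightarrow> 'g \<Rightarrow> 'a::division_ring"
  assumes "finite G" "finite E" "card G < card E"
  shows "\<exists>c. (\<forall>e. e \<notin> E \<longrightarrow> c e = 0) \<and> (\<exists>e\<in>E. c e \<noteq> 0) \<and> (\<forall>g\<in>G. (\<Sum>e\<in>E. c e * v e g) = 0)"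
  using assms
proof (induction G arbitrary: E v rule: finite_induct)
  case empty
  then obtain e0 where "e0 \<in> E" by fastforce
  then show ?case by (intro exI[of _ "\<lambda>e. if e = e0 then 1 else 0"]) auto
next
  case (insert g G)
  show ?case
  proof (cases "\<forall>e\<in>E. v e g = 0")
    case True
    have "card G < card E" using insert by simp
    from insert.IH[OF \<open>finite E\<close> this, of v] obtain c where
      c: "\<forall>e. e \<notin> E \<longrightarrow> c e = 0" "\<exists>e\<in>E. c e \<noteq> 0" "\<forall>g\<in>G. (\<Sum>e\<in>E. c e * v e g) = 0" by blast
    have "(\<Sum>e\<in>E. c e * v e g) = 0" using True by simp
    with c show ?thesis by auto
  next
    case False
    then obtain e0 where e0: "e0 \<in> E" "v e0 g \<noteq> 0" by auto
    define E' where "E' = E - {e0}"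
    define w where "w e h = v e h - (v e g * inverse (v e0 g)) * v e0 h" for e h
    have fE': "finite E'" using insert by (simp add: E'_def)
    have "card G < card E'" using insert e0 by (simp add: E'_def)
    from insert.IH[OF fE' this, of w] obtain c' where
      c': "\<forall>e. e \<notin> E' \<longrightarrow> c' e = 0" "\<exists>e\<in>E'. c' e \<noteq> 0" "\<forall>h\<in>G. (\<Sum>e\<in>E'. c' e * w e h) = 0" by blast
    define k where "k = - (\<Sum>e\<in>E'. c' e * v e g) * inverse (v e0 g)"
    define c where "c e = (if e = e0 then k else c' e)" for e
    have E: "E = insert e0 E'" "e0 \<notin> E'" using e0 by (auto simp: E'_def)
    have sumc: "(\<Sum>e\<in>E. c e * v e h) = k * v e0 h + (\<Sum>e\<in>E'. c' e * v e h)" for h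
    proof -
      have "(\<Sum>e\<in>E. c e * v e h) = c e0 * v e0 h + (\<Sum>e\<in>E'. c e * v e h)"
        using E fE' by simp
      also have "(\<Sum>e\<in>E'. c e * v e h) = (\<Sum>e\<in>E'. c' e * v e h)"
        using E by (intro sum.cong) (auto simp: c_def)
      finally show ?thesis by (simp add: c_def)
    qed
    have "\<forall>h\<in>insert g G. (\<Sum>e\<in>E. c e * v e h) = 0"
    proof
      fix h assume "h \<in> insert g G"
      then consider "h = g" | "h \<in> G" by auto
      then show "(\<Sum>e\<in>E. c e * v e h) = 0"
      proof cases
        case 1
        then show ?thesis using e0 by (simp add: sumc k_def mult.assoc)
      next
        case 2
        have "0 = (\<Sum>e\<in>E'. c' e * w e h)" using c' 2 by simp
        also have "\<dots> = (\<Sum>e\<in>E'. c' e * v e h) - (\<Sum>e\<in>E'. c' e * v e g) * inverse (v e0 g) * v e0 h"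
          by (simp add: w_def right_diff_distrib sum_subtractf sum_distrib_right mult.assoc)
        also have "\<dots> = (\<Sum>e\<in>E. c e * v e h)"
          by (simp add: sumc k_def)
        finally show ?thesis by simp
      qed
    qed
    moreover have "\<forall>e. e \<notin> E \<longrightarrow> c e = 0" using c' E by (auto simp: c_def)
    moreover have "\<exists>e\<in>E. c e \<noteq> 0" using c' E by (auto simp: c_def)
    ultimately show ?thesis by blast
  qed
qed

lemma auto_rhom: "ring_automorphism s \<Longrightarrow> rhom s"
  by (simp add: ring_automorphism_def rhom_def)

theorem lemma5p9:
  fixes \<sigma>1 \<sigma>2 :: "'a::division_ring \<Rightarrow> 'a"
    and x1 x2 :: "(nat \<times> nat \<Rightarrow> 'a) set"
  assumes "ring_automorphism \<sigma>1" and "ring_automorphism \<sigma>2"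
    and "\<sigma>1 \<circ> \<sigma>2 = \<sigma>2 \<circ> \<sigma>1"
    and "x1 \<in> carrier (skew_quot \<sigma>1 \<sigma>2)" and "x2 \<in> carrier (skew_quot \<sigma>1 \<sigma>2)"
    and "x1 \<otimes>\<^bsub>skew_quot \<sigma>1 \<sigma>2\<^esub> x2 = x2 \<otimes>\<^bsub>skew_quot \<sigma>1 \<sigma>2\<^esub> x1"
  shows "left_alg_dependent \<sigma>1 \<sigma>2 x1 x2"
proof -
  interpret skewctx \<sigma>1 \<sigma>2
    using assms(1-3) by (simp add: skewctx_def auto_rhom)
  define S where "S = skew_quot \<sigma>1 \<sigma>2"
  have SI: "S = R Quot I" by (simp add: S_def skew_quot_def)
  interpret Ii: ideal I R by (rule ideal_I)
  define h where "h = (\<lambda>x. I +>\<^bsub>R\<^esub> x)"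
  have hh: "ring_hom_ring R S h" unfolding SI h_def by (rule Ii.rcos_ring_hom_ring)
  interpret H: ring_hom_ring R S h by (rule hh)
  have repr: "\<exists>p\<in>carrier R. x = h p" if "x \<in> carrier S" for x
    using that unfolding SI h_def FactRing_def A_RCOSETS_def RCOSETS_def a_r_coset_def by auto
  obtain p1 where p1: "p1 \<in> carrier R" "x1 = h p1" using repr assms(4) S_def by blast
  obtain p2 where p2: "p2 \<in> carrier R" "x2 = h p2" using repr assms(5) S_def by blast
  obtain d1 where d1: "dg p1 d1" using dg_exists p1 by blast
  obtain d2 where d2: "dg p2 d2" using dg_exists p2 by blast
  define d where "d = d1 + d2"
  have dd1: "dg p1 d" and dd2: "dg p2 d" using d1 d2 dg_mono by (auto simp: d_def)
  define N where "N = 4 * d + 1"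
  define E where "E = {..N} \<times> {..N}"
  define B where "B = 2 * N * d"
  define G where "G = {g. (fst g = 0 \<or> snd g = 0) \<and> fst g + snd g \<le> B}"
  define P where "P e = p1 [^]\<^bsub>R\<^esub> fst e \<otimes>\<^bsub>R\<^esub> p2 [^]\<^bsub>R\<^esub> snd e" for e :: "nat \<times> nat"
  have Pc: "P e \<in> carrier R" for e
    unfolding P_def by (rule Rr.m_closed[OF Rr.nat_pow_closed[OF p1(1)] Rr.nat_pow_closed[OF p2(1)]])
  have Pdg: "dg (P e) (fst e * d + snd e * d)" for e
    unfolding P_def using dg_mult[OF dg_pow[OF dd1] dg_pow[OF dd2]] by (simp only: R_simps)
  have GB: "G \<subseteq> ({..B} \<times> {0}) \<union> ({0} \<times> {..B})" by (auto simp: G_def)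
  have fG: "finite G" by (rule finite_subset[OF GB]) auto
  have "card G \<le> card (({..B} \<times> {0}) \<union> ({0} \<times> {..B}))" by (rule card_mono[OF _ GB]) auto
  also have "\<dots> \<le> card ({..B} \<times> {0::nat}) + card ({0::nat} \<times> {..B})" by (rule card_Un_le)
  also have "\<dots> = 2 * B + 2" by (simp add: card_cartesian_product)
  also have "\<dots> < (N + 1) * (N + 1)" by (simp add: B_def N_def algebra_simps)
  also have "\<dots> = card E" by (simp add: E_def card_cartesian_product)
  finally have cardlt: "card G < card E" .
  have fE: "finite E" by (simp add: E_def)
  obtain c where c: "\<forall>e. e \<notin> E \<longrightarrow> c e = 0" "\<exists>e\<in>E. c e \<noteq> 0"
    "\<forall>g\<in>G. (\<Sum>e\<in>E. c e * P e g) = 0"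
    using lin_dep[OF fG fE cardlt, of "\<lambda>e g. P e g"] by blast
  define A where "A = {e. c e \<noteq> 0}"
  have AE: "A \<subseteq> E" using c by (auto simp: A_def)
  have fA: "finite A" using finite_subset[OF AE fE] .
  define f where "f e = skew_monom (c e) (0,0) \<otimes>\<^bsub>R\<^esub> P e" for e
  have fc: "f e \<in> carrier R" for e
    unfolding f_def by (rule Rr.m_closed[OF _ Pc]) (simp add: monom_supp)
  have fe: "f e = (\<lambda>x. c e * P e x)" for e by (simp add: f_def sm_one_left)
  define Q where "Q = finsum R f A"
  have Qc: "Q \<in> carrier R" unfolding Q_def using fc by (intro Rr.finsum_closed) auto
  have Qv: "Q x = (\<Sum>e\<in>E. c e * P e x)" for x
  proof -
    have "Q x = (\<Sum>e\<in>A. c e * P e x)" unfolding Q_def using fA fc by (simp add: finsum_eval fe)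
    also have "\<dots> = (\<Sum>e\<in>E. c e * P e x)"
      using AE fE by (intro sum.mono_neutral_left) (auto simp: A_def)
    finally show ?thesis .
  qed
  have Qb: "Q g = 0" if "fst g = 0 \<or> snd g = 0" for g
  proof (cases "g \<in> G")
    case True then show ?thesis using c Qv by simp
  next
    case False
    then have big: "fst g + snd g > B" using that by (auto simp: G_def)
    have "P e g = 0" if "e \<in> E" for e
    proof (rule ccontr)
      assume "P e g \<noteq> 0"
      then have "fst g + snd g \<le> fst e * d + snd e * d" using Pdg[of e] by (cases g) (auto simp: dg_def)
      moreover have "fst e * d + snd e * d \<le> B"
      proof -
        have "fst e \<le> N" "snd e \<le> N" using that by (auto simp: E_def)
        then have "fst e * d \<le> N * d" "snd e * d \<le> N * d" by (simp_all add: mult_right_mono)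
        moreover have "B = N * d + N * d" by (simp add: B_def)
        ultimately show ?thesis by linarith
      qed
      ultimately show False using big by linarith
    qed
    then show ?thesis by (simp add: Qv)
  qed
  have QI: "Q \<in> I" using J_in_I[OF Qc] Qb by simp
  have trm: "quot_const \<sigma>1 \<sigma>2 (c e) \<otimes>\<^bsub>S\<^esub> (x1 [^]\<^bsub>S\<^esub> fst e \<otimes>\<^bsub>S\<^esub> x2 [^]\<^bsub>S\<^esub> snd e) = h (f e)" for e :: "nat \<times> nat"
  proof -
    have cm: "skew_monom (c e) (0,0) \<in> carrier R" by (simp add: monom_supp)
    have ca: "p1 [^]\<^bsub>R\<^esub> fst e \<in> carrier R" by (rule Rr.nat_pow_closed[OF p1(1)])
    have cb: "p2 [^]\<^bsub>R\<^esub> snd e \<in> carrier R" by (rule Rr.nat_pow_closed[OF p2(1)])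
    have "h (f e) = h (skew_monom (c e) (0,0)) \<otimes>\<^bsub>S\<^esub> h (p1 [^]\<^bsub>R\<^esub> fst e \<otimes>\<^bsub>R\<^esub> p2 [^]\<^bsub>R\<^esub> snd e)"
      unfolding f_def P_def by (rule H.hom_mult[OF cm Rr.m_closed[OF ca cb]])
    also have "h (p1 [^]\<^bsub>R\<^esub> fst e \<otimes>\<^bsub>R\<^esub> p2 [^]\<^bsub>R\<^esub> snd e) = h (p1 [^]\<^bsub>R\<^esub> fst e) \<otimes>\<^bsub>S\<^esub> h (p2 [^]\<^bsub>R\<^esub> snd e)"
      by (rule H.hom_mult[OF ca cb])
    also have "h (p1 [^]\<^bsub>R\<^esub> fst e) = h p1 [^]\<^bsub>S\<^esub> fst e" by (rule H.hom_nat_pow[OF p1(1)])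
    also have "h (p2 [^]\<^bsub>R\<^esub> snd e) = h p2 [^]\<^bsub>S\<^esub> snd e" by (rule H.hom_nat_pow[OF p2(1)])
    finally have "h (f e) = h (skew_monom (c e) (0,0)) \<otimes>\<^bsub>S\<^esub> (h p1 [^]\<^bsub>S\<^esub> fst e \<otimes>\<^bsub>S\<^esub> h p2 [^]\<^bsub>S\<^esub> snd e)" .
    then show ?thesis by (simp only: quot_const_def h_def p1(2) p2(2))
  qed
  have "finsum S (\<lambda>e. quot_const \<sigma>1 \<sigma>2 (c e) \<otimes>\<^bsub>S\<^esub> (x1 [^]\<^bsub>S\<^esub> fst e \<otimes>\<^bsub>S\<^esub> x2 [^]\<^bsub>S\<^esub> snd e)) A
      = finsum S (h \<circ> f) A" by (simp add: trm comp_def)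
  also have "\<dots> = h Q" unfolding Q_def using fc by (intro H.hom_finsum[symmetric]) auto
  also have "\<dots> = I" unfolding h_def using Rr.a_rcos_zero[OF ideal_I QI] .
  also have "\<dots> = \<zero>\<^bsub>S\<^esub>" by (simp add: SI FactRing_def)
  finally have "finsum S (\<lambda>e. quot_const \<sigma>1 \<sigma>2 (c e) \<otimes>\<^bsub>S\<^esub> (x1 [^]\<^bsub>S\<^esub> fst e \<otimes>\<^bsub>S\<^esub> x2 [^]\<^bsub>S\<^esub> snd e)) A = \<zero>\<^bsub>S\<^esub>" .
  then show ?thesis unfolding left_alg_dependent_def Let_def S_def[symmetric] A_def
    using fA c(2) by (auto simp: A_def)
qed

end
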